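(* Let $\lambda\in\mathbf{C}$ with $\lambda\neq1$. For every $n\in\mathbf{Z}_{+}$ (nonnegative integers), \[ \frac{1}{n+1}\sum_{k=0}^{n}H_{k}(x\vert\lambda)H_{n-k}(x\vert\lambda) =\sum_{k=0}^{n-1}\frac{\binom{n}{k}}{n-k+1}\Bigl\{-\lambda\sum_{l=k}^{n}H_{l-k}(\lambda)H_{n-l}(\lambda)+2\lambda H_{n-k}(\lambda)\Bigr\}H_{k}(x\vert\lambda)+H_{n}(x\vert\lambda). \]
   Context: For $\lambda\in\mathbf{C}$, $\lambda\neq1$, the Frobenius–Euler polynomials $H_n(x\vert\lambda)$ are defined by the generating function $\frac{1-\lambda}{e^{t}-\lambda}e^{xt}=\sum_{n=0}^{\infty}H_{n}(x\vert\lambda)\frac{t^{n}}{n!}$, and the Frobenius–Euler numbers are $H_n(\lambda)=H_n(0\vert\lambda)$. An empty sum (e.g. when $n=0$) is $0$. *)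

theory Defs
  imports Complex_Main "HOL-Computational_Algebra.Formal_Power_Series"
begin

definition FE_gf :: "complex \<Rightarrow> complex \<Rightarrow> complex fps" where
  "FE_gf lam x = fps_const (1 - lam) * inverse (fps_exp 1 - fps_const lam) * fps_exp x"

definition FE_poly :: "nat \<Rightarrow> complex \<Rightarrow> complex \<Rightarrow> complex" where
  "FE_poly n x lam = fact n * fps_nth (FE_gf lam x) n"

definition FE_num :: "nat \<Rightarrow> complex \<Rightarrow> complex" where
  "FE_num n lam = FE_poly n 0 lam"

end

theory Submission
  imports Defs
begin

lemma fps_exp_zero': "fps_exp (0::complex) = 1"
  by (simp add: fps_eq_iff)

lemma gf_split: "FE_gf lam x = FE_gf lam 0 * fps_exp x"
  by (simp add: FE_gf_def fps_exp_zero')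

lemma gf0_mult:
  assumes "lam \<noteq> 1"
  shows "FE_gf lam 0 * (fps_exp 1 - fps_const lam) = fps_const (1 - lam)"
proof -
  have "fps_nth (fps_exp 1 - fps_const lam) 0 \<noteq> 0" using assms by simp
  hence "inverse (fps_exp 1 - fps_const lam) * (fps_exp 1 - fps_const lam) = 1"
    by (rule inverse_mult_eq_1)
  thus ?thesis by (simp add: FE_gf_def fps_exp_zero' mult.assoc)
qed

lemma poly_expand:
  "FE_poly n x lam = (\<Sum>i\<le>n. of_nat (n choose i) * FE_num i lam * x ^ (n - i))"
proof -
  have "FE_poly n x lam = fact n * (\<Sum>i=0..n. fps_nth (FE_gf lam 0) i * (x ^ (n - i) / fact (n - i)))"
    by (simp add: FE_poly_def gf_split[of lam x] fps_mult_nth)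
  also have "\<dots> = (\<Sum>i=0..n. of_nat (n choose i) * FE_num i lam * x ^ (n - i))"
    unfolding sum_distrib_left
  proof (rule sum.cong)
    fix i assume "i \<in> {0..n}"
    hence i: "i \<le> n" by simp
    show "fact n * (fps_nth (FE_gf lam 0) i * (x ^ (n - i) / fact (n - i))) =
      of_nat (n choose i) * FE_num i lam * x ^ (n - i)"
      by (simp add: binomial_fact[OF i] FE_num_def FE_poly_def field_simps)
  qed simp
  finally show ?thesis by (simp add: atLeast0AtMost)
qed

lemma poly_at1:
  assumes "lam \<noteq> 1"
  shows "FE_poly k 1 lam = lam * FE_num k lam + (if k = 0 then 1 - lam else 0)"
proof -
  have "FE_gf lam 1 = FE_gf lam 0 * (fps_exp 1 - fps_const lam) + FE_gf lam 0 * fps_const lam"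
    by (simp add: gf_split[of lam 1] algebra_simps)
  also have "\<dots> = fps_const (1 - lam) + fps_const lam * FE_gf lam 0"
    using gf0_mult[OF assms] by (simp add: mult.commute)
  finally have "fps_nth (FE_gf lam 1) k = fps_nth (fps_const (1 - lam) + fps_const lam * FE_gf lam 0) k" by simp
  thus ?thesis by (simp add: FE_poly_def FE_num_def algebra_simps)
qed

lemma vand_upper: "(\<Sum>k\<le>n. (k choose i) * ((n - k) choose j)) = Suc n choose (i + j + 1)"
proof (induction n arbitrary: j)
  case 0
  then show ?case by (cases i; cases j) auto
next
  case (Suc n)
  show ?case
  proof (cases j)
    case 0
    then show ?thesis using sum_choose_upper[of i "Suc n"] by (simp del: sum.atMost_Suc binomial_Suc_Suc)
  next
    case (Suc j')
    have "(\<Sum>k\<le>Suc n. (k choose i) * ((Suc n - k) choose j))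
        = (\<Sum>k\<le>n. (k choose i) * ((Suc n - k) choose j))"
      using Suc by simp
    also have "\<dots> = (\<Sum>k\<le>n. (k choose i) * ((n - k) choose j) + (k choose i) * ((n - k) choose j'))"
      by (rule sum.cong) (auto simp: Suc Suc_diff_le algebra_simps)
    also have "\<dots> = (Suc n choose (i + j + 1)) + (Suc n choose (i + j' + 1))"
      by (simp add: sum.distrib Suc.IH)
    also have "\<dots> = Suc (Suc n) choose (i + j + 1)"
      using Suc by simp
    finally show ?thesis .
  qed
qed

lemma swap3: "(\<Sum>k\<in>A. \<Sum>i\<in>B. \<Sum>j\<in>C. f k i j) = (\<Sum>i\<in>B. \<Sum>j\<in>C. \<Sum>k\<in>A. f k i j)"
proof -
  have "(\<Sum>k\<in>A. \<Sum>i\<in>B. \<Sum>j\<in>C. f k i j) = (\<Sum>i\<in>B. \<Sum>k\<in>A. \<Sum>j\<in>C. f k i j)"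
    by (rule sum.swap)
  also have "\<dots> = (\<Sum>i\<in>B. \<Sum>j\<in>C. \<Sum>k\<in>A. f k i j)"
    by (rule sum.cong[OF refl], rule sum.swap)
  finally show ?thesis .
qed

lemma aux_field: "(N::complex) \<noteq> 0 \<Longrightarrow> M \<noteq> 0 \<Longrightarrow> N' = N \<Longrightarrow> M' = M \<Longrightarrow>
  1 / N' * (N * C / M * X * S) = C * (1 / M' * S) * X"
  by (simp add: field_simps)

definition Aseq :: "complex \<Rightarrow> nat \<Rightarrow> complex" where
  "Aseq lam m = (1 / of_nat (m + 1)) * (\<Sum>i=0..m. FE_num i lam * FE_num (m - i) lam)"

lemma poly_expand_n:
  assumes "k \<le> n"
  shows "FE_poly k x lam = (\<Sum>i\<le>n. of_nat (k choose i) * FE_num i lam * x ^ (k - i))"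
  unfolding poly_expand
  by (rule sum.mono_neutral_left) (use assms in auto)

lemma appell_P:
  "(1 / of_nat (n + 1)) * (\<Sum>k=0..n. FE_poly k x lam * FE_poly (n - k) x lam)
   = (\<Sum>m\<le>n. of_nat (n choose m) * Aseq lam m * x ^ (n - m))"
proof -
  define h where "h i = FE_num i lam" for i
  define F where "F i j = of_nat (Suc n choose (i + j + 1)) * h i * h j * x ^ (n - i - j)" for i j
  have "(\<Sum>k=0..n. FE_poly k x lam * FE_poly (n - k) x lam)
     = (\<Sum>k\<le>n. \<Sum>i\<le>n. \<Sum>j\<le>n. of_nat ((k choose i) * ((n - k) choose j)) * h i * h j * x ^ (n - i - j))"
    unfolding atLeast0AtMost
  proof (rule sum.cong[OF refl])
    fix k assume k: "k \<in> {..n}"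
    have "FE_poly k x lam * FE_poly (n - k) x lam =
      (\<Sum>i\<le>n. of_nat (k choose i) * h i * x ^ (k - i)) * (\<Sum>j\<le>n. of_nat ((n - k) choose j) * h j * x ^ (n - k - j))"
      using k poly_expand_n[of k n x lam] poly_expand_n[of "n - k" n x lam] by (simp only: h_def) simp
    also have "\<dots> = (\<Sum>i\<le>n. \<Sum>j\<le>n. of_nat (k choose i) * h i * x ^ (k - i) * (of_nat ((n - k) choose j) * h j * x ^ (n - k - j)))"
      by (rule sum_product)
    also have "\<dots> = (\<Sum>i\<le>n. \<Sum>j\<le>n. of_nat ((k choose i) * ((n - k) choose j)) * h i * h j * x ^ (n - i - j))"
    proof (intro sum.cong refl)
      fix i j
      show "of_nat (k choose i) * h i * x ^ (k - i) * (of_nat ((n - k) choose j) * h j * x ^ (n - k - j)) =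
        of_nat ((k choose i) * ((n - k) choose j)) * h i * h j * x ^ (n - i - j)"
      proof (cases "i \<le> k \<and> j \<le> n - k")
        case True
        have e: "k - i + (n - k - j) = n - i - j" using True k by auto
        have "x ^ (k - i) * x ^ (n - k - j) = x ^ (n - i - j)"
          by (simp only: power_add[symmetric] e)
        then show ?thesis by (simp add: algebra_simps)
      next
        case False
        then show ?thesis by auto
      qed
    qed
    finally show "FE_poly k x lam * FE_poly (n - k) x lam = (\<Sum>i\<le>n. \<Sum>j\<le>n. of_nat ((k choose i) * ((n - k) choose j)) * h i * h j * x ^ (n - i - j))" .
  qed
  also have "\<dots> = (\<Sum>i\<le>n. \<Sum>j\<le>n. \<Sum>k\<le>n. of_nat ((k choose i) * ((n - k) choose j)) * h i * h j * x ^ (n - i - j))"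
    by (rule swap3)
  also have "\<dots> = (\<Sum>i\<le>n. \<Sum>j\<le>n. F i j)"
  proof (intro sum.cong refl)
    fix i j
    have "(\<Sum>k\<le>n. of_nat ((k choose i) * ((n - k) choose j)) * h i * h j * x ^ (n - i - j))
       = of_nat (\<Sum>k\<le>n. (k choose i) * ((n - k) choose j)) * (h i * h j * x ^ (n - i - j))"
      by (simp only: of_nat_sum sum_distrib_right mult.assoc)
    also have "\<dots> = F i j" by (simp only: vand_upper F_def mult.assoc)
    finally show "(\<Sum>k\<le>n. of_nat ((k choose i) * ((n - k) choose j)) * h i * h j * x ^ (n - i - j)) = F i j" .
  qed
  also have "\<dots> = (\<Sum>(i,j)\<in>{..n} \<times> {..n}. F i j)"
    by (rule sum.cartesian_product)
  also have "\<dots> = (\<Sum>(i,j)\<in>{(i,j). i + j \<le> n}. F i j)"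
    by (rule sum.mono_neutral_right) (auto simp: F_def binomial_eq_0 simp del: binomial_Suc_Suc)
  also have "\<dots> = (\<Sum>m\<le>n. \<Sum>i\<le>m. F i (m - i))"
    by (rule sum.triangle_reindex_eq)
  also have "\<dots> = (\<Sum>m\<le>n. of_nat (Suc n choose Suc m) * x ^ (n - m) * (\<Sum>i\<le>m. h i * h (m - i)))"
    unfolding sum_distrib_left
    by (intro sum.cong refl) (simp add: F_def algebra_simps)
  finally have eq: "(\<Sum>k=0..n. FE_poly k x lam * FE_poly (n - k) x lam) = \<dots>" .
  show ?thesis
    unfolding eq
  proof (subst sum_distrib_left, intro sum.cong refl)
    fix m assume m: "m \<in> {..n}"
    have b: "of_nat (Suc m) * of_nat (Suc n choose Suc m) = (of_nat (Suc n) * of_nat (n choose m) :: complex)"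
      using Suc_times_binomial[of m n] by (metis of_nat_mult)
    have nz1: "1 + of_nat n \<noteq> (0::complex)" by (metis add.commute of_nat_Suc of_nat_neq_0)
    have nz2: "1 + of_nat m \<noteq> (0::complex)" by (metis add.commute of_nat_Suc of_nat_neq_0)
    have bb: "of_nat (Suc n choose Suc m) = (of_nat (Suc n) * of_nat (n choose m) / of_nat (Suc m) :: complex)"
      using b by (simp add: eq_divide_eq mult.commute del: binomial_Suc_Suc of_nat_Suc)
    show "1 / of_nat (n + 1) * (of_nat (Suc n choose Suc m) * x ^ (n - m) * (\<Sum>i\<le>m. h i * h (m - i))) =
         of_nat (n choose m) * Aseq lam m * x ^ (n - m)"
      unfolding bb Aseq_def h_def atLeast0AtMost by (rule aux_field) (simp_all add: nz1 nz2)
  qed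
qed

definition Dseq :: "complex \<Rightarrow> nat \<Rightarrow> complex" where
  "Dseq lam m = (- lam * (\<Sum>i=0..m. FE_num i lam * FE_num (m - i) lam) + 2 * lam * FE_num m lam
     + (if m = 0 then 1 - lam else 0)) / of_nat (m + 1)"

lemma num0: "lam \<noteq> 1 \<Longrightarrow> FE_num 0 lam = 1"
  by (simp add: FE_num_def FE_poly_def FE_gf_def fps_exp_zero' fps_inverse_def)

lemma shiftsum: fixes k n :: nat shows "k \<le> n \<Longrightarrow> (\<Sum>l=k..n. f (l - k) (n - l)) = (\<Sum>i=0..n-k. f i (n - k - i))"
  by (rule sum.reindex_bij_witness[where j="\<lambda>l. l - k" and i="\<lambda>i. i + k"]) auto

lemma rhs_eq:
  assumes "lam \<noteq> 1"
  shows "(\<Sum>k=0..<n. (of_nat (n choose k) / of_nat (n - k + 1)) *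
          (- lam * (\<Sum>l=k..n. FE_num (l - k) lam * FE_num (n - l) lam)
           + 2 * lam * FE_num (n - k) lam) * FE_poly k x lam)
      + FE_poly n x lam = (\<Sum>k\<le>n. of_nat (n choose k) * Dseq lam (n - k) * FE_poly k x lam)"
proof -
  have "(\<Sum>k\<le>n. of_nat (n choose k) * Dseq lam (n - k) * FE_poly k x lam)
     = (\<Sum>k<n. of_nat (n choose k) * Dseq lam (n - k) * FE_poly k x lam) + FE_poly n x lam"
    using assms by (simp add: lessThan_Suc_atMost[symmetric] Dseq_def num0)
  also have "(\<Sum>k<n. of_nat (n choose k) * Dseq lam (n - k) * FE_poly k x lam)
     = (\<Sum>k=0..<n. (of_nat (n choose k) / of_nat (n - k + 1)) *
          (- lam * (\<Sum>l=k..n. FE_num (l - k) lam * FE_num (n - l) lam)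
           + 2 * lam * FE_num (n - k) lam) * FE_poly k x lam)"
    unfolding atLeast0LessThan
  proof (rule sum.cong[OF refl])
    fix k assume "k \<in> {..<n}"
    hence k: "k < n" by simp
    have "(\<Sum>l=k..n. FE_num (l - k) lam * FE_num (n - l) lam) = (\<Sum>i=0..n-k. FE_num i lam * FE_num (n - k - i) lam)"
      using k by (intro shiftsum) simp
    then show "of_nat (n choose k) * Dseq lam (n - k) * FE_poly k x lam =
      (of_nat (n choose k) / of_nat (n - k + 1)) *
          (- lam * (\<Sum>l=k..n. FE_num (l - k) lam * FE_num (n - l) lam)
           + 2 * lam * FE_num (n - k) lam) * FE_poly k x lam"
      using k by (simp add: Dseq_def)
  qed
  finally show ?thesis by simp
qed

lemma aux2: "(N::complex) \<noteq> 0 \<Longrightarrow> 1 / N * (lam\<^sup>2 * S + lam * (h * (1 - lam)) + lam * ((1 - lam) * h) + (1 - lam) * e)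
   - lam * (1 / N * S) = (1 - lam) * ((- lam * S + 2 * lam * h + e) / N)"
  by (simp add: field_simps power2_eq_square)

lemma key_num:
  assumes "lam \<noteq> 1"
  shows "(1 / of_nat (m + 1)) * (\<Sum>k=0..m. FE_poly k 1 lam * FE_poly (m - k) 1 lam) - lam * Aseq lam m
    = (1 - lam) * Dseq lam m"
proof -
  define h where "h i = FE_num i lam" for i
  define e where "e (i::nat) = (if i = 0 then 1 - lam else (0::complex))" for i
  define S where "S = (\<Sum>i=0..m. h i * h (m - i))"
  have "(\<Sum>k=0..m. FE_poly k 1 lam * FE_poly (m - k) 1 lam)
      = (\<Sum>k=0..m. lam^2 * (h k * h (m - k)) + lam * (h k * e (m - k)) + lam * (e k * h (m - k)) + e k * e (m - k))"
    by (intro sum.cong refl) (simp add: poly_at1[OF assms] h_def e_def algebra_simps power2_eq_square)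
  also have "\<dots> = lam^2 * S + lam * (\<Sum>k=0..m. h k * e (m - k)) + lam * (\<Sum>k=0..m. e k * h (m - k))
      + (\<Sum>k=0..m. e k * e (m - k))"
    by (simp add: sum.distrib sum_distrib_left S_def)
  also have "(\<Sum>k=0..m. h k * e (m - k)) = (\<Sum>k=0..m. if k = m then h m * (1 - lam) else 0)"
    by (intro sum.cong refl) (auto simp: e_def)
  also have "\<dots> = h m * (1 - lam)" by simp
  also have "(\<Sum>k=0..m. e k * h (m - k)) = (\<Sum>k=0..m. if k = 0 then (1 - lam) * h m else 0)"
    by (intro sum.cong refl) (auto simp: e_def)
  also have "\<dots> = (1 - lam) * h m" by simp
  also have "(\<Sum>k=0..m. e k * e (m - k)) = (\<Sum>k=0..m. if k = 0 then (1 - lam) * e m else 0)"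
    by (intro sum.cong refl) (auto simp: e_def)
  also have "\<dots> = (1 - lam) * e m" by simp
  finally have eq: "(\<Sum>k=0..m. FE_poly k 1 lam * FE_poly (m - k) 1 lam) =
     lam\<^sup>2 * S + lam * (h m * (1 - lam)) + lam * ((1 - lam) * h m) + (1 - lam) * e m" .
  have nz: "of_nat (m + 1) \<noteq> (0::complex)" by (metis of_nat_Suc of_nat_neq_0 Suc_eq_plus1)
  have A: "Aseq lam m = 1 / of_nat (m + 1) * S" by (simp add: Aseq_def S_def h_def)
  have D: "Dseq lam m = (- lam * S + 2 * lam * h m + e m) / of_nat (m + 1)"
    by (simp add: Dseq_def S_def h_def e_def)
  show ?thesis
    unfolding eq A D by (rule aux2[OF nz])
qed

theorem theorem3:
  fixes lam x :: complex and n :: nat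
  assumes "lam \<noteq> 1"
  shows "(1 / of_nat (n + 1)) * (\<Sum>k=0..n. FE_poly k x lam * FE_poly (n - k) x lam)
    = (\<Sum>k=0..<n. (of_nat (n choose k) / of_nat (n - k + 1)) *
          (- lam * (\<Sum>l=k..n. FE_num (l - k) lam * FE_num (n - l) lam)
           + 2 * lam * FE_num (n - k) lam) * FE_poly k x lam)
      + FE_poly n x lam"
proof -
  define Af where "Af = Abs_fps (\<lambda>m. Aseq lam m / fact m)"
  define Df where "Df = Abs_fps (\<lambda>m. Dseq lam m / fact m)"
  define G where "G = FE_gf lam 0"
  define E where "E = (fps_exp 1 :: complex fps)"
  have coef: "fps_nth (Af * (E - fps_const lam)) m = fps_nth (fps_const (1 - lam) * Df) m" for m
  proof -
    have "fps_nth (Af * E) m = (\<Sum>i=0..m. Aseq lam i / fact i * (1 / fact (m - i)))"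
      by (simp add: fps_mult_nth Af_def E_def)
    also have "\<dots> = (\<Sum>i\<le>m. of_nat (m choose i) * Aseq lam i * 1 ^ (m - i)) / fact m"
      unfolding sum_divide_distrib atLeast0AtMost
    proof (rule sum.cong[OF refl])
      fix i assume "i \<in> {..m}"
      hence i: "i \<le> m" by simp
      show "Aseq lam i / fact i * (1 / fact (m - i)) = of_nat (m choose i) * Aseq lam i * 1 ^ (m - i) / fact m"
        by (simp add: binomial_fact[OF i] field_simps)
    qed
    also have "\<dots> = ((1 / of_nat (m + 1)) * (\<Sum>k=0..m. FE_poly k 1 lam * FE_poly (m - k) 1 lam)) / fact m"
      by (simp only: appell_P)
    also have "\<dots> = ((1 - lam) * Dseq lam m + lam * Aseq lam m) / fact m"
      using key_num[OF assms, of m] by (simp only: diff_eq_eq)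
    finally have "fps_nth (Af * E) m = \<dots>" .
    moreover have "fps_nth (Af * (E - fps_const lam)) m = fps_nth (Af * E) m - lam * (Aseq lam m / fact m)"
      by (simp add: algebra_simps Af_def)
    ultimately show ?thesis by (simp add: Df_def field_simps)
  qed
  have AE: "Af * (E - fps_const lam) = fps_const (1 - lam) * Df"
    using coef by (simp add: fps_eq_iff)
  have GE: "G * (E - fps_const lam) = fps_const (1 - lam)"
    unfolding G_def E_def by (rule gf0_mult[OF assms])
  have "fps_const (1 - lam) * Af = fps_const (1 - lam) * (G * Df)"
  proof -
    have "fps_const (1 - lam) * Af = Af * (G * (E - fps_const lam))" by (simp add: GE mult.commute)
    also have "\<dots> = G * (Af * (E - fps_const lam))" by (simp add: algebra_simps)
    also have "\<dots> = G * (fps_const (1 - lam) * Df)" by (simp only: AE)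
    also have "\<dots> = fps_const (1 - lam) * (G * Df)" by (simp only: mult.left_commute)
    finally show ?thesis .
  qed
  moreover have "fps_const (1 - lam) \<noteq> (0 :: complex fps)" using assms by simp
  ultimately have AG: "Af = G * Df" by simp
  have main: "FE_gf lam x * Df = Af * fps_exp x"
    unfolding AG G_def by (simp add: gf_split[of lam x] algebra_simps)
  have L: "(1 / of_nat (n + 1)) * (\<Sum>k=0..n. FE_poly k x lam * FE_poly (n - k) x lam)
      = fact n * fps_nth (Af * fps_exp x) n"
  proof -
    have "fact n * fps_nth (Af * fps_exp x) n = fact n * (\<Sum>i=0..n. Aseq lam i / fact i * (x ^ (n - i) / fact (n - i)))"
      by (simp add: fps_mult_nth Af_def)
    also have "\<dots> = (\<Sum>i\<le>n. of_nat (n choose i) * Aseq lam i * x ^ (n - i))"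
      unfolding sum_distrib_left atLeast0AtMost
    proof (rule sum.cong[OF refl])
      fix i assume "i \<in> {..n}"
      hence i: "i \<le> n" by simp
      show "fact n * (Aseq lam i / fact i * (x ^ (n - i) / fact (n - i))) = of_nat (n choose i) * Aseq lam i * x ^ (n - i)"
        by (simp add: binomial_fact[OF i] field_simps)
    qed
    finally show ?thesis by (simp only: appell_P)
  qed
  have R: "(\<Sum>k\<le>n. of_nat (n choose k) * Dseq lam (n - k) * FE_poly k x lam)
      = fact n * fps_nth (FE_gf lam x * Df) n"
  proof -
    have "fact n * fps_nth (FE_gf lam x * Df) n = fact n * (\<Sum>i=0..n. FE_poly i x lam / fact i * (Dseq lam (n - i) / fact (n - i)))"
      by (simp add: fps_mult_nth Df_def FE_poly_def)
    also have "\<dots> = (\<Sum>i\<le>n. of_nat (n choose i) * Dseq lam (n - i) * FE_poly i x lam)"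
      unfolding sum_distrib_left atLeast0AtMost
    proof (rule sum.cong[OF refl])
      fix i assume "i \<in> {..n}"
      hence i: "i \<le> n" by simp
      show "fact n * (FE_poly i x lam / fact i * (Dseq lam (n - i) / fact (n - i))) = of_nat (n choose i) * Dseq lam (n - i) * FE_poly i x lam"
        by (simp add: binomial_fact[OF i] field_simps)
    qed
    finally show ?thesis by simp
  qed
  show ?thesis
    unfolding rhs_eq[OF assms] L R main ..
qed

end
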